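(* Take $\Omega=D=\mathbb{C}\setminus\{0,-1,-2,\dots\}$. For every $\delta>0$ there exists a Lebesgue measurable set $S\subseteq D$ with two-dimensional Lebesgue measure $\lambda(S)<\delta$ such that $\mathrm{Cl}_D(S)=D$.
   Context: Let $\Omega$ be either $(0,\infty)$ or $D=\mathbb{C}\setminus\{0,-1,-2,\dots\}$. An admissible instance (relative to $\Omega$) is one of the following finite lists of points, all entries of which are required to lie in $\Omega$: (i) $(z+1,\,z)$ for $z\in\Omega$ with $z+1\in\Omega$ (corresponding to the identity $\Gamma(z+1)=z\Gamma(z)$); (ii) $(z,\,1-z)$ for $z\in\Omega\setminus\mathbb{Z}$ with $1-z\in\Omega$ (corresponding to $\Gamma(z)\Gamma(1-z)=\pi/\sin(\pi z)$); (iii) for an integer $n\ge 2$, $\big(z,\,\tfrac{z}{n},\,\tfrac{z+1}{n},\dots,\tfrac{z+n-1}{n}\big)$ (corresponding to Gauss's multiplication formula $(2\pi)^{(n-1)/2}n^{1/2-z}\Gamma(z)=\prod_{j=0}^{n-1}\Gamma(\tfrac{z+j}{n})$). For $B\subseteq\Omega$, a point $p\in\Omega$ is obtained from $B$ in one step if there is an admissible instance in which $p$ occurs exactly once as an entry and every other entry lies in $B$. Set $B_0=B$, $B_{i+1}=B_i\cup\{p: p \text{ obtained from } B_i \text{ in one step}\}$, and $\mathrm{Cl}_\Omega(B)=\bigcup_{i\ge0}B_i$ (the set of points at which the value of $\Gamma$ is determined by its values on $B$ via finitely many applications of the identities). For $A,B\subseteq\Omega$ write $A\preceq B$ if $A\subseteq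 \mathrm{Cl}_\Omega(B)$. A set $S\subseteq\Omega$ is a fundamental set (for $\Gamma$ on $\Omega$) if $\mathrm{Cl}_\Omega(S)=\Omega$. *)

theory Defs
  imports "HOL-Analysis.Analysis"
begin

definition gammaD :: "complex set" where
  "gammaD = UNIV - {z. \<exists>n::nat. z = - of_nat n}"

definition admissible :: "complex set \<Rightarrow> complex list \<Rightarrow> bool" where
  "admissible \<Omega> xs \<longleftrightarrow> set xs \<subseteq> \<Omega> \<and>
     ((\<exists>z. xs = [z + 1, z]) \<or>
      (\<exists>z. z \<notin> \<int> \<and> xs = [z, 1 - z]) \<or>
      (\<exists>z (n::nat). n \<ge> 2 \<and> xs = z # map (\<lambda>j. (z + of_nat j) / of_nat n) [0..<n]))"

definition one_step :: "complex set \<Rightarrow> complex set \<Rightarrow> complex \<Rightarrow> bool" where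
  "one_step \<Omega> B p \<longleftrightarrow> p \<in> \<Omega> \<and>
     (\<exists>xs. admissible \<Omega> xs \<and> count_list xs p = 1 \<and> (\<forall>q\<in>set xs. q \<noteq> p \<longrightarrow> q \<in> B))"

definition step_set :: "complex set \<Rightarrow> complex set \<Rightarrow> complex set" where
  "step_set \<Omega> B = B \<union> {p. one_step \<Omega> B p}"

definition Cl :: "complex set \<Rightarrow> complex set \<Rightarrow> complex set" where
  "Cl \<Omega> B = (\<Union>i. (step_set \<Omega> ^^ i) B)"

end

theory Submission
  imports Defs
begin

lemma stage_mono:
  assumes "i \<le> j" shows "(step_set \<Omega> ^^ i) B \<subseteq> (step_set \<Omega> ^^ j) B"
  using assms
proof (induction rule: dec_induct)
  case base then show ?case by simp
next
  case (step n) then show ?case by (auto simp: step_set_def)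
qed

lemma finite_in_stage:
  assumes "finite F" "F \<subseteq> Cl \<Omega> B" shows "\<exists>i. F \<subseteq> (step_set \<Omega> ^^ i) B"
  using assms
proof (induction F rule: finite_induct)
  case empty then show ?case by simp
next
  case (insert x F)
  then obtain i where i: "F \<subseteq> (step_set \<Omega> ^^ i) B" by auto
  from insert obtain k where k: "x \<in> (step_set \<Omega> ^^ k) B" by (auto simp: Cl_def)
  have "F \<subseteq> (step_set \<Omega> ^^ max i k) B" using i stage_mono[of i "max i k"] by auto
  moreover have "x \<in> (step_set \<Omega> ^^ max i k) B" using k stage_mono[of k "max i k"] by auto
  ultimately show ?case by blast
qed

lemma Cl_closed:
  assumes "one_step \<Omega> (Cl \<Omega> B) p" shows "p \<in> Cl \<Omega> B"
proof -
  from assms obtain xs where xs: "admissible \<Omega> xs" "count_list xs p = 1"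
    "\<forall>q\<in>set xs. q \<noteq> p \<longrightarrow> q \<in> Cl \<Omega> B" and p: "p \<in> \<Omega>"
    unfolding one_step_def by blast
  have "set xs - {p} \<subseteq> Cl \<Omega> B" using xs(3) by auto
  then obtain i where i: "set xs - {p} \<subseteq> (step_set \<Omega> ^^ i) B"
    using finite_in_stage[of "set xs - {p}" \<Omega> B] by auto
  have "one_step \<Omega> ((step_set \<Omega> ^^ i) B) p"
    unfolding one_step_def using xs p i by blast
  then have "p \<in> (step_set \<Omega> ^^ Suc i) B" by (simp add: step_set_def)
  then show ?thesis unfolding Cl_def by blast
qed

lemma Cl_sub:
  assumes "B \<subseteq> \<Omega>" shows "Cl \<Omega> B \<subseteq> \<Omega>"
proof -
  have "(step_set \<Omega> ^^ i) B \<subseteq> \<Omega>" for i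
    by (induction i) (use assms in \<open>auto simp: step_set_def one_step_def\<close>)
  then show ?thesis unfolding Cl_def by blast
qed

lemma base_in_Cl: "B \<subseteq> Cl \<Omega> B"
  unfolding Cl_def by (metis UN_upper UNIV_I funpow_0)

lemma gammaD_iff: "z \<in> gammaD \<longleftrightarrow> (\<forall>n::nat. z \<noteq> - of_nat n)"
  by (auto simp: gammaD_def)

lemma fwd:
  assumes "z \<in> Cl gammaD B" "B \<subseteq> gammaD" shows "z + 1 \<in> Cl gammaD B"
proof (rule Cl_closed)
  have z: "z \<in> gammaD" using assms Cl_sub by blast
  have z1: "z + 1 \<in> gammaD"
  proof -
    have "z + 1 \<noteq> - of_nat n" for n :: nat
    proof
      assume "z + 1 = - of_nat n"
      then have "z = - of_nat (Suc n)"
        by (metis add_diff_cancel_right' diff_minus_eq_add minus_add_distrib of_nat_Suc add.commute)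
      with z show False unfolding gammaD_iff by blast
    qed
    then show ?thesis by (simp add: gammaD_iff)
  qed
  show "one_step gammaD (Cl gammaD B) (z + 1)"
    unfolding one_step_def admissible_def
    apply (rule conjI[OF z1])
    apply (rule exI[of _ "[z+1, z]"])
    using z z1 assms(1) by auto
qed

lemma bwd:
  assumes "z + 1 \<in> Cl gammaD B" "z \<in> gammaD" shows "z \<in> Cl gammaD B"
proof (rule Cl_closed)
  have z1: "z + 1 \<in> gammaD"
  proof -
    have "z + 1 \<noteq> - of_nat n" for n :: nat
    proof
      assume "z + 1 = - of_nat n"
      then have "z = - of_nat (Suc n)"
        by (metis add_diff_cancel_right' diff_minus_eq_add minus_add_distrib of_nat_Suc add.commute)
      with assms(2) show False unfolding gammaD_iff by blast
    qed
    then show ?thesis by (simp add: gammaD_iff)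
  qed
  show "one_step gammaD (Cl gammaD B) z"
    unfolding one_step_def admissible_def
    apply (rule conjI[OF assms(2)])
    apply (rule exI[of _ "[z+1, z]"])
    using assms z1 by auto
qed

lemma dbl:
  assumes "z / 2 \<in> Cl gammaD B" "(z + 1) / 2 \<in> Cl gammaD B" "z \<in> gammaD" "Im z \<noteq> 0"
  shows "z \<in> Cl gammaD B"
proof (rule Cl_closed)
  have B: "B \<subseteq> gammaD \<Longrightarrow> True" by simp
  have nr: "w \<in> gammaD" if "Im w \<noteq> 0" for w
    using that by (auto simp: gammaD_iff)
  have m: "map (\<lambda>j. (z + of_nat j) / 2) [0..<2] = [z/2, (z+1)/2]"
    by (simp add: numeral_2_eq_2)
  have ne1: "z \<noteq> z / 2" using assms(4) by (auto simp: complex_eq_iff)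
  have ne2: "z \<noteq> (z + 1) / 2" using assms(4) by (auto simp: complex_eq_iff)
  have g1: "z / 2 \<in> gammaD" by (rule nr) (use assms(4) in simp)
  have g2: "(z + 1) / 2 \<in> gammaD" by (rule nr) (use assms(4) in simp)
  show "one_step gammaD (Cl gammaD B) z"
    unfolding one_step_def admissible_def
    apply (rule conjI[OF assms(3)])
    apply (rule exI[of _ "[z, z/2, (z+1)/2]"])
    using assms ne1 ne2 g1 g2 ne1[symmetric] ne2[symmetric] m
    by (auto intro!: exI[of _ z] exI[of _ "2::nat"])
qed

lemma gD_plus1: "z \<in> gammaD \<Longrightarrow> z + 1 \<in> gammaD"
  using fwd[of z "{z}"] Cl_sub[of "{z}" gammaD] base_in_Cl[of "{z}" gammaD] by blast

lemma fwdn: "z \<in> Cl gammaD B \<Longrightarrow> B \<subseteq> gammaD \<Longrightarrow> z + of_nat n \<in> Cl gammaD B"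
proof (induction n)
  case 0 then show ?case by simp
next
  case (Suc n)
  have "z + of_nat (Suc n) = (z + of_nat n) + 1" by simp
  then show ?case using fwd[of "z + of_nat n" B] Suc by metis
qed

lemma bwdn: "z \<in> gammaD \<Longrightarrow> z + of_nat n \<in> Cl gammaD B \<Longrightarrow> z \<in> Cl gammaD B"
proof (induction n arbitrary: z)
  case 0 then show ?case by simp
next
  case (Suc n)
  have "z + of_nat (Suc n) = (z + 1) + of_nat n" by simp
  then have "z + 1 \<in> Cl gammaD B"
    using Suc.IH[of "z+1"] Suc.prems gD_plus1 by metis
  then show ?case using bwd Suc.prems by blast
qed

lemma box_meas: "emeasure lebesgue (box a (b::complex)) = emeasure lborel (box a b)"
  by simp

theorem mainTheorem10:
  fixes \<delta> :: real
  assumes "\<delta> > 0"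
  shows "\<exists>S. S \<in> sets lebesgue \<and> S \<subseteq> gammaD \<and> emeasure lebesgue S < ennreal \<delta>
             \<and> Cl gammaD S = gammaD"
proof -
  define e where "e = \<delta> / 8"
  have e: "e > 0" using assms by (simp add: e_def)
  define S where "S = box (Complex 0 (-e)) (Complex 2 e)"
  have memS: "z \<in> S \<longleftrightarrow> 0 < Re z \<and> Re z < 2 \<and> -e < Im z \<and> Im z < e" for z
    by (simp add: S_def mem_box Basis_complex_def)
  have SD: "S \<subseteq> gammaD"
  proof
    fix z assume "z \<in> S"
    then have "Re z > 0" by (simp add: memS)
    then show "z \<in> gammaD" by (auto simp: gammaD_iff)
  qed
  have meas: "emeasure lebesgue S = ennreal (4 * e)"
    unfolding S_def box_meas using e
    by (simp add: emeasure_lborel_box_eq Basis_complex_def)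
  have strip: "z \<in> Cl gammaD S" if z: "z \<in> gammaD" "\<bar>Im z\<bar> < e" for z
  proof -
    define m where "m = \<lceil>Re z\<rceil> - 1"
    define w where "w = z - of_int m"
    have "Re w = Re z - of_int m" by (simp add: w_def)
    then have "0 < Re w" "Re w \<le> 1"
      unfolding m_def by linarith+
    moreover have "Im w = Im z" by (simp add: w_def)
    ultimately have "w \<in> S" using z by (simp add: memS abs_less_iff)
    then have wC: "w \<in> Cl gammaD S" using base_in_Cl by blast
    show ?thesis
    proof (cases "m \<ge> 0")
      case True
      then have "z = w + of_nat (nat m)" by (simp add: w_def)
      then show ?thesis using fwdn[OF wC SD] by metis
    next
      case False
      then have "z + of_nat (nat (-m)) = w" by (simp add: w_def)
      then show ?thesis using bwdn[OF z(1)] wC by metis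
    qed
  qed
  have pow: "z \<in> Cl gammaD S" if "z \<in> gammaD" "\<bar>Im z\<bar> < 2^k * e" for k z
    using that
  proof (induction k arbitrary: z)
    case 0 then show ?case using strip by simp
  next
    case (Suc k)
    show ?case
    proof (cases "Im z = 0")
      case True then show ?thesis using strip Suc.prems e by simp
    next
      case False
      have nr: "w \<in> gammaD" if "Im w \<noteq> 0" for w
        using that by (auto simp: gammaD_iff)
      have "z / 2 \<in> Cl gammaD S"
        using Suc.IH[of "z/2"] nr[of "z/2"] False Suc.prems(2) by simp
      moreover have "(z + 1) / 2 \<in> Cl gammaD S"
        using Suc.IH[of "(z+1)/2"] nr[of "(z+1)/2"] False Suc.prems(2) by simp
      ultimately show ?thesis using dbl Suc.prems(1) False by blast
    qed
  qed
  have "Cl gammaD S = gammaD"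
  proof
    show "Cl gammaD S \<subseteq> gammaD" by (rule Cl_sub[OF SD])
    show "gammaD \<subseteq> Cl gammaD S"
    proof
      fix z assume z: "z \<in> gammaD"
      obtain k where "\<bar>Im z\<bar> / e < 2 ^ k" using real_arch_pow[of 2 "\<bar>Im z\<bar> / e"] by auto
      then have "\<bar>Im z\<bar> < 2^k * e" using e by (simp add: field_simps)
      then show "z \<in> Cl gammaD S" using pow z by blast
    qed
  qed
  moreover have "S \<in> sets lebesgue" by (simp add: S_def)
  moreover have "emeasure lebesgue S < ennreal \<delta>"
    using meas e assms by (simp add: e_def ennreal_lessI)
  ultimately show ?thesis using SD by blast
qed

end
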